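(* Let $\phi=\tilde p/p$ be a degree $(n,1)$ rational inner function as in the context, and let $Q,R_1,\dots,R_n\in\mathbb{C}[z_1,z_2]$ be polynomials with $\deg Q\le(n,0)$, $\deg R_j\le(n-1,1)$ such that for all $z,w\in\mathbb{C}^2$ $$p(z)\overline{p(w)}-\tilde p(z)\overline{\tilde p(w)}=(1-z_1\bar w_1)\sum_{j=1}^nR_j(z)\overline{R_j(w)}+(1-z_2\bar w_2)Q(z)\overline{Q(w)}.$$ Then: (i) $|Q(\zeta_1)|^2=|p_1(\zeta_1)|^2-|p_2(\zeta_1)|^2$ for all $\zeta_1\in\mathbb{T}$; (ii) for every $\alpha\in\mathbb{T}$ and each $j$, there are a unique polynomial $r_j$ in one variable with $\deg r_j\le n-1$ and a rational function $b_j$ in the disk algebra $A(\mathbb{D})$ (in fact $b_j\in H^2(\mathbb{D})\ominus B_\alpha H^2(\mathbb{D})$) such that $R_j(z)=r_j(z_1)\bigl(1-B_\alpha(z_1)z_2\bigr)+z_2Q(z_1)b_j(z_1)$ for all $z\in\overline{\mathbb{D}}^2$.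
   Context: $\mathbb{D}$ is the open unit disk, $\mathbb{T}$ the unit circle; $\deg$ of a two-variable polynomial is the pair of its degrees in $z_1$ and $z_2$, and $Q$ with $\deg Q\le(n,0)$ is regarded as a one-variable polynomial $Q(z_1)$. Fix $n\ge1$. Let $p\in\mathbb{C}[z_1,z_2]$ have no zeros on $\mathbb{D}^2$, degree at most $n$ in $z_1$ and at most $1$ in $z_2$; write $p(z)=p_1(z_1)+z_2p_2(z_1)$. Set $\tilde p(z)=z_1^nz_2\overline{p(1/\bar z_1,1/\bar z_2)}=z_2\tilde p_1(z_1)+\tilde p_2(z_1)$ with $\tilde p_i(z)=z^n\overline{p_i(1/\bar z)}$. Assume $\tilde p$ has degree exactly $(n,1)$ and $p,\tilde p$ have no common factor, so $\phi=\tilde p/p$ is a degree $(n,1)$ rational inner function. $B_\alpha$ is the rational function $\frac{\tilde p_1(z)-\alpha p_2(z)}{\alpha p_1(z)-\tilde p_2(z)}$ with common factors cancelled (a finite Blaschke product). *)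

theory Defs
  imports "HOL-Analysis.Analysis" "HOL-Computational_Algebra.Computational_Algebra" "HOL-Computational_Algebra.Field_as_Ring"
begin

text \<open>Two-variable polynomials are represented as elements of complex poly poly:
  a polynomial in z2 whose coefficients are polynomials in z1.
  Thus degree P is the degree in z2 and the degree in z1 is the maximum of
  the degrees of the coefficients.\<close>

definition eval2 :: "complex poly poly \<Rightarrow> complex \<Rightarrow> complex \<Rightarrow> complex" where
  "eval2 P z1 z2 = poly (map_poly (\<lambda>c. poly c z1) P) z2"

definition degz1 :: "complex poly poly \<Rightarrow> nat" where
  "degz1 P = Max ((\<lambda>i. degree (coeff P i)) ` {..degree P})"

text \<open>One-variable reflection: refl1 n q (z) = z^n * conj (q (1 / conj z)).\<close>
definition refl1 :: "nat \<Rightarrow> complex poly \<Rightarrow> complex poly" where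
  "refl1 n q = (\<Sum>i\<le>n. monom (cnj (coeff q (n - i))) i)"

text \<open>Reflection of p = p1 + z2 p2 w.r.t. degree (n,1):
  ptilde = z2 * refl1 n p1 + refl1 n p2, i.e. z1^n z2 conj(p(1/conj z1, 1/conj z2)).\<close>
definition ptilde :: "nat \<Rightarrow> complex poly poly \<Rightarrow> complex poly poly" where
  "ptilde n P = [: refl1 n (coeff P 1), refl1 n (coeff P 0) :]"

definition Balpha :: "nat \<Rightarrow> complex poly poly \<Rightarrow> complex \<Rightarrow> complex \<Rightarrow> complex" where
  "Balpha n P \<alpha> z =
     (let num = refl1 n (coeff P 0) - smult \<alpha> (coeff P 1);
          den = smult \<alpha> (coeff P 0) - refl1 n (coeff P 1);
          g = gcd num den
      in poly (num div g) z / poly (den div g) z)"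

definition rational_disk_algebra :: "(complex \<Rightarrow> complex) \<Rightarrow> bool" where
  "rational_disk_algebra b \<longleftrightarrow>
     (\<exists>u v. v \<noteq> 0 \<and> (\<forall>z\<in>cball 0 1. poly v z \<noteq> 0 \<longrightarrow> b z = poly u z / poly v z))
     \<and> continuous_on (cball 0 1) b \<and> b holomorphic_on ball 0 1"

text \<open>For b in A(D) (hence in H^2): b is orthogonal to B H^2 in H^2, i.e. orthogonal
  (boundary inner product) to B z^k for all k, since the B z^k span a dense subspace
  of B H^2.\<close>
definition orth_BH2 :: "(complex \<Rightarrow> complex) \<Rightarrow> (complex \<Rightarrow> complex) \<Rightarrow> bool" where
  "orth_BH2 B b \<longleftrightarrow>
     (\<forall>k::nat. integral {0..2*pi} (\<lambda>t. b (cis t) * cnj (B (cis t) * cis t ^ k)) = 0)"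

end

theory Submission
  imports Defs "HOL-Complex_Analysis.Complex_Analysis"
begin



lemma poly_eq_infinite:
  fixes p q :: "complex poly"
  assumes "infinite S" "\<And>z. z \<in> S \<Longrightarrow> poly p z = poly q z"
  shows "p = q"
proof (rule ccontr)
  assume "p \<noteq> q"
  hence "p - q \<noteq> 0" by simp
  hence "finite {x. poly (p - q) x = 0}" by (rule poly_roots_finite)
  moreover have "S \<subseteq> {x. poly (p - q) x = 0}" using assms(2) by auto
  ultimately show False using assms(1) finite_subset by blast
qed

lemma infinite_sphere01: "infinite (sphere (0::complex) 1)"
proof
  assume "finite (sphere (0::complex) 1)"
  with connected_finite_iff_sing[OF connected_sphere[of "0::complex" 1]]
  have "sphere (0::complex) 1 = {} \<or> (\<exists>a. sphere (0::complex) 1 = {a})" by simp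
  moreover have "1 \<in> sphere (0::complex) 1" "-1 \<in> sphere (0::complex) 1" by auto
  ultimately show False by (metis empty_iff neg_equal_iff_equal one_neq_neg_one singletonD)
qed

lemma infinite_ball01: "infinite (ball (0::complex) 1)"
proof
  assume "finite (ball (0::complex) 1)"
  moreover have "(\<lambda>x::real. complex_of_real x) ` {0..<1} \<subseteq> ball 0 1" by auto
  ultimately have "finite ((\<lambda>x::real. complex_of_real x) ` {0..<1})" by (rule finite_subset[rotated])
  hence "finite {0..<(1::real)}" using finite_imageD inj_on_def by (metis (mono_tags, lifting) of_real_eq_iff)
  thus False using infinite_Ico[of "0::real" 1] by simp
qed

lemma infinite_cofinite: "finite (F::complex set) \<Longrightarrow> infinite (UNIV - F)"
  by (simp add: Diff_infinite_finite infinite_UNIV_char_0)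

lemma eval2_deg1:
  assumes "degree P \<le> 1"
  shows "eval2 P z1 z2 = poly (coeff P 0) z1 + z2 * poly (coeff P 1) z1"
proof -
  define a b where "a = coeff P 0" "b = coeff P 1"
  have P_eq: "P = [:a, b:]"
  proof (rule poly_eqI)
    fix i show "coeff P i = coeff [:a, b:] i"
      using assms coeff_eq_0[of P i] by (cases i; cases "i - 1") (auto simp: a_b_def)
  qed
  show ?thesis unfolding P_eq eval2_def a_b_def[symmetric] by (auto simp: map_poly_pCons)
qed

lemma refl1_0[simp]: "refl1 n 0 = 0" by (simp add: refl1_def)

lemma poly_refl1_circle:
  assumes "degree q \<le> n" "cmod z = 1"
  shows "poly (refl1 n q) z = z^n * cnj (poly q z)"
proof -
  have zc: "z * cnj z = 1" using assms(2) complex_norm_square[of z] by simp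
  have "poly q z = (\<Sum>i\<le>n. coeff q i * z ^ i)"
    using poly_as_sum_of_monoms'[OF assms(1)]
    by (metis (no_types, lifting) poly_monom poly_sum sum.cong)
  hence "z^n * cnj (poly q z) = (\<Sum>i\<le>n. cnj (coeff q i) * (z^n * cnj z ^ i))"
    by (simp add: sum_distrib_left algebra_simps)
  also have "\<dots> = (\<Sum>i\<le>n. cnj (coeff q i) * z^(n - i))"
  proof (rule sum.cong)
    fix i assume "i \<in> {..n}"
    hence "z^n = z^(n-i) * z^i" by (simp add: power_add[symmetric])
    hence "z^n * cnj z ^ i = z^(n-i) * (z * cnj z)^i" by (simp add: power_mult_distrib)
    thus "cnj (coeff q i) * (z^n * cnj z ^ i) = cnj (coeff q i) * z^(n - i)" using zc by simp
  qed simp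
  also have "\<dots> = (\<Sum>i\<le>n. cnj (coeff q (n - i)) * z^i)"
    by (rule sum.reindex_bij_witness[of _ "\<lambda>i. n - i" "\<lambda>i. n - i"]) auto
  also have "\<dots> = poly (refl1 n q) z"
    by (simp add: refl1_def poly_sum poly_monom)
  finally show ?thesis by simp
qed





lemma cancel2:
  fixes f :: "complex poly" and X :: "complex \<Rightarrow> complex \<Rightarrow> complex"
  assumes f: "f \<noteq> 0" and H: "\<And>z w. poly f z \<noteq> 0 \<Longrightarrow> poly f w \<noteq> 0 \<Longrightarrow> X z w = 0"
    and P1: "\<And>w. \<exists>P. \<forall>z. X z w = poly P z" and P2: "\<And>z. \<exists>P. \<forall>w. X z w = cnj (poly P w)"
  shows "X z w = 0"
proof -
  have fin: "finite {x. poly f x = 0}" using f by (rule poly_roots_finite)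
  hence inf: "infinite (UNIV - {x. poly f x = 0})" by (rule infinite_cofinite)
  have A: "X z' w' = 0" if "poly f w' \<noteq> 0" for z' w'
  proof -
    obtain P where P: "\<forall>z. X z w' = poly P z" using P1 by blast
    have "P = 0"
    proof (rule poly_eq_infinite[OF inf])
      fix z assume "z \<in> UNIV - {x. poly f x = 0}"
      thus "poly P z = poly 0 z" using P H[of z w'] that by auto
    qed
    thus ?thesis using P by simp
  qed
  obtain P where P: "\<forall>w. X z w = cnj (poly P w)" using P2 by blast
  have "P = 0"
  proof (rule poly_eq_infinite[OF inf])
    fix w assume "w \<in> UNIV - {x. poly f x = 0}"
    hence "X z w = 0" using A by auto
    thus "poly P w = poly 0 w" using P by (metis complex_cnj_zero_iff poly_0)
  qed
  thus ?thesis using P by simp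
qed

lemma cancel_kernel:
  fixes f F A C :: "complex poly" and u :: "nat \<Rightarrow> complex poly" and J :: "nat set"
  assumes f: "f \<noteq> 0"
    and H: "\<And>z w. poly f z * cnj (poly f w) * ((1 - z*cnj w) * (\<Sum>j\<in>J. poly (u j) z * cnj (poly (u j) w))
           - poly F z * cnj (poly F w) * (poly A z * cnj (poly A w) - poly C z * cnj (poly C w))) = 0"
  shows "(1 - z*cnj w) * (\<Sum>j\<in>J. poly (u j) z * cnj (poly (u j) w))
           = poly F z * cnj (poly F w) * (poly A z * cnj (poly A w) - poly C z * cnj (poly C w))"
proof -
  let ?X = "\<lambda>z w. (1 - z*cnj w) * (\<Sum>j\<in>J. poly (u j) z * cnj (poly (u j) w))
           - poly F z * cnj (poly F w) * (poly A z * cnj (poly A w) - poly C z * cnj (poly C w))"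
  have "?X z w = 0"
  proof (rule cancel2[of f ?X, OF f])
    fix z w assume "poly f z \<noteq> 0" "poly f w \<noteq> 0"
    thus "?X z w = 0" using H[of z w] by simp
  next
    fix w
    show "\<exists>P. \<forall>z. ?X z w = poly P z"
      by (rule exI[of _ "[:1, - cnj w:] * (\<Sum>j\<in>J. smult (cnj (poly (u j) w)) (u j))
          - smult (cnj (poly F w)) (F * (smult (cnj (poly A w)) A - smult (cnj (poly C w)) C))"])
         (simp add: poly_sum algebra_simps sum_distrib_left)
  next
    fix z
    show "\<exists>P. \<forall>w. ?X z w = cnj (poly P w)"
      by (rule exI[of _ "[:1, - cnj z:] * (\<Sum>j\<in>J. smult (cnj (poly (u j) z)) (u j))
          - smult (cnj (poly F z)) (F * (smult (cnj (poly A z)) A - smult (cnj (poly C z)) C))"])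
         (simp add: poly_sum algebra_simps sum_distrib_left)
  qed
  thus ?thesis by simp
qed

lemma sum_cnj_mult_zero:
  fixes c :: "nat \<Rightarrow> complex"
  assumes "finite J" "(\<Sum>j\<in>J. cnj (c j) * c j) = 0" "j \<in> J"
  shows "c j = 0"
proof -
  have e: "\<And>j. cnj (c j) * c j = of_real ((cmod (c j))\<^sup>2)"
    by (metis complex_norm_square mult.commute)
  have "(\<Sum>j\<in>J. cnj (c j) * c j) = of_real (\<Sum>j\<in>J. (cmod (c j))\<^sup>2)"
    by (simp only: e of_real_sum)
  hence "(\<Sum>j\<in>J. (cmod (c j))\<^sup>2) = 0" using assms(2) by (metis of_real_eq_0_iff)
  hence "(cmod (c j))\<^sup>2 = 0" using sum_nonneg_eq_0_iff[OF assms(1), of "\<lambda>j. (cmod (c j))\<^sup>2"] assms(3) by simp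
  thus ?thesis by simp
qed

lemma coprime_no_common_root:
  fixes a b :: "complex poly"
  assumes "coprime a b" "poly a x = 0" "poly b x = 0"
  shows False
proof -
  have "[:-x, 1:] dvd a" "[:-x, 1:] dvd b" using assms poly_eq_0_iff_dvd by blast+
  hence "is_unit [:-x, 1:]" using assms(1) coprime_common_divisor by blast
  thus False by (auto simp: is_unit_poly_iff)
qed

lemma mod_sum_smult:
  fixes Q :: "complex poly"
  shows "(\<Sum>j\<in>J. smult (a j) (h j)) mod Q = (\<Sum>j\<in>J. smult (a j) (h j mod Q))"
proof (induction J rule: infinite_finite_induct)
  case (insert x F) thus ?case by (simp add: poly_mod_add_left mod_smult_left)
qed auto





locale prop36 =
  fixes n :: nat and p :: "complex poly poly" and Q :: "complex poly"
    and R :: "nat \<Rightarrow> complex poly poly"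
  assumes n: "n \<ge> 1"
    and deg_p: "degree p \<le> 1" "\<forall>i. degree (coeff p i) \<le> n"
    and deg_pt: "degree (ptilde n p) = 1"
    and copr: "coprime p (ptilde n p)"
    and deg_R: "\<forall>j\<in>{1..n}. degree (R j) \<le> 1 \<and> (\<forall>i. degree (coeff (R j) i) \<le> n - 1)"
    and agler: "\<forall>z1 z2 w1 w2.
        eval2 p z1 z2 * cnj (eval2 p w1 w2) - eval2 (ptilde n p) z1 z2 * cnj (eval2 (ptilde n p) w1 w2)
        = (1 - z1 * cnj w1) * (\<Sum>j=1..n. eval2 (R j) z1 z2 * cnj (eval2 (R j) w1 w2))
          + (1 - z2 * cnj w2) * (poly Q z1 * cnj (poly Q w1))"
begin

definition "P1 = coeff p 0"
definition "P2 = coeff p 1"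
definition "T1 = refl1 n P1"
definition "T2 = refl1 n P2"
definition "r j = coeff (R j) 0"
definition "s j = coeff (R j) 1"

lemma pt_eq: "ptilde n p = [:T2, T1:]"
  by (simp add: ptilde_def T1_def T2_def P1_def P2_def)

lemma ev_p: "eval2 p z1 z2 = poly P1 z1 + z2 * poly P2 z1"
  using eval2_deg1[OF deg_p(1)] by (simp add: P1_def P2_def)

lemma ev_pt: "eval2 (ptilde n p) z1 z2 = poly T2 z1 + z2 * poly T1 z1"
  unfolding pt_eq eval2_def by (auto simp: map_poly_pCons)

lemma ev_R: "j \<in> {1..n} \<Longrightarrow> eval2 (R j) z1 z2 = poly (r j) z1 + z2 * poly (s j) z1"
  using eval2_deg1[of "R j"] deg_R by (simp add: r_def s_def)

lemma agler2:
  "(poly P1 z + a * poly P2 z) * cnj (poly P1 w + b * poly P2 w)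
   - (poly T2 z + a * poly T1 z) * cnj (poly T2 w + b * poly T1 w)
   = (1 - z * cnj w) * (\<Sum>j=1..n. (poly (r j) z + a * poly (s j) z) * cnj (poly (r j) w + b * poly (s j) w))
     + (1 - a * cnj b) * (poly Q z * cnj (poly Q w))"
proof -
  have "(\<Sum>j=1..n. eval2 (R j) z a * cnj (eval2 (R j) w b))
      = (\<Sum>j=1..n. (poly (r j) z + a * poly (s j) z) * cnj (poly (r j) w + b * poly (s j) w))"
    by (rule sum.cong) (simp_all add: ev_R)
  thus ?thesis using agler[rule_format, of z a w b] by (simp add: ev_p ev_pt)
qed

lemma p_eq: "p = [:P1, P2:]"
proof (rule poly_eqI)
  fix i show "coeff p i = coeff [:P1, P2:] i"
    using deg_p(1) coeff_eq_0[of p i] by (cases i; cases "i - 1") (auto simp: P1_def P2_def)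
qed

lemma T1_ne: "T1 \<noteq> 0"
  using deg_pt by (auto simp: pt_eq)

lemma P1_ne: "P1 \<noteq> 0"
  using T1_ne by (auto simp: T1_def)

lemma deg_P1: "degree P1 \<le> n" and deg_P2: "degree P2 \<le> n"
  using deg_p(2) by (auto simp: P1_def P2_def)

lemma circ_T1: "cmod z = 1 \<Longrightarrow> poly T1 z = z^n * cnj (poly P1 z)"
  unfolding T1_def by (rule poly_refl1_circle[OF deg_P1])
lemma circ_T2: "cmod z = 1 \<Longrightarrow> poly T2 z = z^n * cnj (poly P2 z)"
  unfolding T2_def by (rule poly_refl1_circle[OF deg_P2])

lemma part1_c:
  assumes "cmod z = 1"
  shows "poly Q z * cnj (poly Q z) = poly P1 z * cnj (poly P1 z) - poly P2 z * cnj (poly P2 z)"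
proof -
  have zc: "z * cnj z = 1" using assms complex_norm_square[of z] by simp
  have "poly T2 z * cnj (poly T2 z) = (z * cnj z)^n * (poly P2 z * cnj (poly P2 z))"
    by (simp add: circ_T2[OF assms] power_mult_distrib algebra_simps)
  hence e: "poly T2 z * cnj (poly T2 z) = poly P2 z * cnj (poly P2 z)" using zc by simp
  show ?thesis using agler2[of z 0 z 0] e zc by simp
qed

lemma part1:
  assumes "cmod z = 1"
  shows "(cmod (poly Q z))\<^sup>2 = (cmod (poly P1 z))\<^sup>2 - (cmod (poly P2 z))\<^sup>2"
proof -
  have "complex_of_real ((cmod (poly Q z))\<^sup>2) = of_real ((cmod (poly P1 z))\<^sup>2 - (cmod (poly P2 z))\<^sup>2)"
    using part1_c[OF assms] by (simp only: of_real_diff complex_norm_square)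
  thus ?thesis using of_real_eq_iff by blast
qed

lemma Q_ne: "Q \<noteq> 0"
proof
  assume Q0: "Q = 0"
  have "P1 * T1 = P2 * T2"
  proof (rule poly_eq_infinite[OF infinite_sphere01])
    fix z :: complex assume "z \<in> sphere 0 1"
    hence z: "cmod z = 1" by simp
    have "poly P1 z * cnj (poly P1 z) = poly P2 z * cnj (poly P2 z)"
      using part1_c[OF z] Q0 by simp
    thus "poly (P1 * T1) z = poly (P2 * T2) z"
      by (simp add: circ_T1[OF z] circ_T2[OF z] algebra_simps)
  qed
  hence "[:P1:] * [:T2, T1:] = [:T2:] * [:P1, P2:]"
    by (simp add: algebra_simps)
  hence "[:P1:] * ptilde n p = [:T2:] * p"
    by (simp only: pt_eq p_eq[symmetric])
  hence "p dvd [:P1:] * ptilde n p" by (metis dvd_triv_right)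
  hence dv: "p dvd [:P1:]" using copr coprime_dvd_mult_left_iff by blast
  show False
  proof (cases "P2 = 0")
    case True
    thus False using \<open>P1 * T1 = P2 * T2\<close> P1_ne T1_ne by simp
  next
    case False
    hence "degree [:P1, P2:] = 1" by simp
    hence "degree p = 1" by (metis p_eq)
    moreover have "degree p \<le> degree [:P1:]" using dvd_imp_degree_le[OF dv] P1_ne by simp
    ultimately show False by simp
  qed
qed

end



lemma K_alg:
  fixes p1z p2z t1z t2z cp1w cp2w ct1w ct2w k Srr Ssr Srs Sss QQ al ca :: complex
  assumes E00: "p1z*cp1w - t2z*ct2w = k*Srr + QQ"
    and E10: "(p1z + p2z)*cp1w - (t2z + t1z)*ct2w = k*(Srr + Ssr) + QQ"
    and E01: "p1z*(cp1w + cp2w) - t2z*(ct2w + ct1w) = k*(Srr + Srs) + QQ"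
    and E11: "(p1z + p2z)*(cp1w + cp2w) - (t2z + t1z)*(ct2w + ct1w) = k*(Srr + Ssr + Srs + Sss)"
    and aa: "al * ca = 1"
  shows "k * ((t1z - al*p2z)*(ct1w - ca*cp2w)*Srr + (al*p1z - t2z)*(ct1w - ca*cp2w)*Ssr
             + (t1z - al*p2z)*(ca*cp1w - ct2w)*Srs + (al*p1z - t2z)*(ca*cp1w - ct2w)*Sss)
         = QQ * ((al*p1z - t2z)*(ca*cp1w - ct2w) - (t1z - al*p2z)*(ct1w - ca*cp2w))"
proof -
  have a: "k*Srr = p1z*cp1w - t2z*ct2w - QQ" using E00 by simp
  have b: "k*Ssr = p2z*cp1w - t1z*ct2w" using E10 E00 by (simp add: algebra_simps)
  have c: "k*Srs = p1z*cp2w - t2z*ct1w" using E01 E00 by (simp add: algebra_simps)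
  have d: "k*Sss = p2z*cp2w - t1z*ct1w + QQ" using E11 E10 E01 E00 by (simp add: algebra_simps)
  have "k * ((t1z - al*p2z)*(ct1w - ca*cp2w)*Srr + (al*p1z - t2z)*(ct1w - ca*cp2w)*Ssr
             + (t1z - al*p2z)*(ca*cp1w - ct2w)*Srs + (al*p1z - t2z)*(ca*cp1w - ct2w)*Sss)
     = (t1z - al*p2z)*(ct1w - ca*cp2w)*(k*Srr) + (al*p1z - t2z)*(ct1w - ca*cp2w)*(k*Ssr)
             + (t1z - al*p2z)*(ca*cp1w - ct2w)*(k*Srs) + (al*p1z - t2z)*(ca*cp1w - ct2w)*(k*Sss)"
    by (simp add: algebra_simps)
  also have "\<dots> = (t1z - al*p2z)*(ct1w - ca*cp2w)*(p1z*cp1w - t2z*ct2w - QQ) + (al*p1z - t2z)*(ct1w - ca*cp2w)*(p2z*cp1w - t1z*ct2w)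
             + (t1z - al*p2z)*(ca*cp1w - ct2w)*(p1z*cp2w - t2z*ct1w) + (al*p1z - t2z)*(ca*cp1w - ct2w)*(p2z*cp2w - t1z*ct1w + QQ)"
    by (simp only: a b c d)
  also have "\<dots> = QQ * ((al*p1z - t2z)*(ca*cp1w - ct2w) - (t1z - al*p2z)*(ct1w - ca*cp2w))
      + (t1z*p1z - t2z*p2z) * (ct1w*cp1w - ct2w*cp2w) * (1 - al*ca)"
    by (simp add: algebra_simps)
  finally show ?thesis using aa by simp
qed




locale prop36a = prop36 +
  fixes \<alpha> :: complex
  assumes alpha: "cmod \<alpha> = 1"
begin

definition "N = T1 - smult \<alpha> P2"
definition "D = smult \<alpha> P1 - T2"
definition "g = gcd N D"
definition "Nc = N div g"
definition "Dc = D div g"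
definition "h j = Nc * r j + Dc * s j"
definition "q j = h j div Q"
definition "B z = poly Nc z / poly Dc z"
definition "b j z = poly (q j) z / poly Dc z"

lemma aa: "\<alpha> * cnj \<alpha> = 1"
  using alpha complex_norm_square[of \<alpha>] by simp

lemma Balpha_eq: "Balpha n p \<alpha> = B"
  by (rule ext) (simp add: Balpha_def B_def Nc_def Dc_def g_def N_def D_def T1_def T2_def P1_def P2_def Let_def)

lemma ND_ne: "N \<noteq> 0 \<or> D \<noteq> 0"
proof (rule ccontr)
  assume "\<not> (N \<noteq> 0 \<or> D \<noteq> 0)"
  hence e: "T1 = smult \<alpha> P2" "T2 = smult \<alpha> P1" by (auto simp: N_def D_def)
  have "[:T2, T1:] = [:[:\<alpha>:]:] * [:P1, P2:]" by (simp add: e)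
  hence "ptilde n p = [:[:\<alpha>:]:] * p" by (simp only: pt_eq p_eq[symmetric])
  hence "p dvd ptilde n p" by (metis dvd_triv_right)
  hence "is_unit p" using copr coprime_common_divisor[of p "ptilde n p" p] by simp
  then obtain c where "p = [:c:]" by (auto simp: is_unit_poly_iff)
  hence "coeff p 1 = 0" by simp
  hence "P2 = 0" by (simp add: P2_def)
  hence "smult \<alpha> P1 = 0" using e by (simp add: T2_def)
  moreover have "\<alpha> \<noteq> 0" using alpha by auto
  ultimately show False using P1_ne by simp
qed

lemma g_ne: "g \<noteq> 0" using ND_ne by (simp add: g_def)

lemma N_eq: "N = g * Nc" and D_eq: "D = g * Dc"
  by (simp_all add: g_def Nc_def Dc_def)

lemma copr_c: "coprime Nc Dc"
  unfolding Nc_def Dc_def g_def by (rule div_gcd_coprime[OF ND_ne])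

lemma K0:
  "(1 - z * cnj w) * (\<Sum>j=1..n. poly (N * r j + D * s j) z * cnj (poly (N * r j + D * s j) w))
   = poly Q z * cnj (poly Q w) * (poly D z * cnj (poly D w) - poly N z * cnj (poly N w))"
proof -
  define Srr where "Srr = (\<Sum>j=1..n. poly (r j) z * cnj (poly (r j) w))"
  define Ssr where "Ssr = (\<Sum>j=1..n. poly (s j) z * cnj (poly (r j) w))"
  define Srs where "Srs = (\<Sum>j=1..n. poly (r j) z * cnj (poly (s j) w))"
  define Sss where "Sss = (\<Sum>j=1..n. poly (s j) z * cnj (poly (s j) w))"
  have S: "(\<Sum>j=1..n. (poly (r j) z + a * poly (s j) z) * cnj (poly (r j) w + c * poly (s j) w))
     = Srr + a * Ssr + cnj c * Srs + a * cnj c * Sss" for a c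
    by (simp add: Srr_def Ssr_def Srs_def Sss_def sum.distrib sum_distrib_left algebra_simps)
  have E: "(poly P1 z + a * poly P2 z) * cnj (poly P1 w + c * poly P2 w)
   - (poly T2 z + a * poly T1 z) * cnj (poly T2 w + c * poly T1 w)
   = (1 - z * cnj w) * (Srr + a * Ssr + cnj c * Srs + a * cnj c * Sss)
     + (1 - a * cnj c) * (poly Q z * cnj (poly Q w))" for a c
    using agler2[of z a w c] S[of a c] by simp
  have E00: "poly P1 z * cnj (poly P1 w) - poly T2 z * cnj (poly T2 w)
     = (1 - z * cnj w) * Srr + poly Q z * cnj (poly Q w)" using E[of 0 0] by simp
  have E10: "(poly P1 z + poly P2 z) * cnj (poly P1 w) - (poly T2 z + poly T1 z) * cnj (poly T2 w)
     = (1 - z * cnj w) * (Srr + Ssr) + poly Q z * cnj (poly Q w)" using E[of 1 0] by simp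
  have E01: "poly P1 z * (cnj (poly P1 w) + cnj (poly P2 w)) - poly T2 z * (cnj (poly T2 w) + cnj (poly T1 w))
     = (1 - z * cnj w) * (Srr + Srs) + poly Q z * cnj (poly Q w)" using E[of 0 1] by simp
  have E11: "(poly P1 z + poly P2 z) * (cnj (poly P1 w) + cnj (poly P2 w)) - (poly T2 z + poly T1 z) * (cnj (poly T2 w) + cnj (poly T1 w))
     = (1 - z * cnj w) * (Srr + Ssr + Srs + Sss)" using E[of 1 1] by simp
  have L: "(\<Sum>j=1..n. poly (N * r j + D * s j) z * cnj (poly (N * r j + D * s j) w))
    = poly N z * cnj (poly N w) * Srr + poly D z * cnj (poly N w) * Ssr
      + poly N z * cnj (poly D w) * Srs + poly D z * cnj (poly D w) * Sss"
    by (simp add: Srr_def Ssr_def Srs_def Sss_def sum.distrib sum_distrib_left algebra_simps)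
  show ?thesis
    unfolding L using K_alg[OF E00 E10 E01 E11 aa] by (simp add: N_def D_def)
qed

lemma K1:
  "(1 - z * cnj w) * (\<Sum>j=1..n. poly (h j) z * cnj (poly (h j) w))
   = poly Q z * cnj (poly Q w) * (poly Dc z * cnj (poly Dc w) - poly Nc z * cnj (poly Nc w))"
proof (rule cancel_kernel[OF g_ne])
  fix z w
  have e: "N * r j + D * s j = g * h j" for j by (simp add: N_eq D_eq h_def algebra_simps)
  have "(\<Sum>j=1..n. poly (N * r j + D * s j) z * cnj (poly (N * r j + D * s j) w))
     = poly g z * cnj (poly g w) * (\<Sum>j=1..n. poly (h j) z * cnj (poly (h j) w))"
    by (simp only: e) (simp add: sum_distrib_left algebra_simps)
  thus "poly g z * cnj (poly g w) * ((1 - z * cnj w) * (\<Sum>j=1..n. poly (h j) z * cnj (poly (h j) w))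
     - poly Q z * cnj (poly Q w) * (poly Dc z * cnj (poly Dc w) - poly Nc z * cnj (poly Nc w))) = 0"
    using K0[of z w] by (simp add: N_eq D_eq algebra_simps)
qed

end




context prop36a begin

lemma Q_dvd_h:
  assumes j: "j \<in> {1..n}"
  shows "Q dvd h j"
proof -
  define W where "W = UNIV - (\<lambda>x. 1 / cnj x) ` {x. poly Q x = 0}"
  have infW: "infinite W" unfolding W_def using poly_roots_finite[OF Q_ne]
    by (intro infinite_cofinite) auto
  define H where "H w = (\<Sum>j=1..n. smult (cnj (poly (h j) w)) (h j))" for w
  have dvdH: "Q dvd H w" if "w \<in> W" for w
  proof -
    have peq: "[:1, - cnj w:] * H w = Q * smult (cnj (poly Q w)) (smult (cnj (poly Dc w)) Dc - smult (cnj (poly Nc w)) Nc)"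
    proof (subst poly_eq_poly_eq_iff[symmetric], rule ext)
      fix z
      show "poly ([:1, - cnj w:] * H w) z = poly (Q * smult (cnj (poly Q w)) (smult (cnj (poly Dc w)) Dc - smult (cnj (poly Nc w)) Nc)) z"
        using K1[of z w] by (simp add: H_def poly_sum sum_distrib_left algebra_simps)
    qed
    have cop: "coprime Q [:1, - cnj w:]"
    proof (cases "w = 0")
      case True thus ?thesis by (simp add: one_pCons[symmetric])
    next
      case False
      have pr: "prime_elem [:1, - cnj w:]" by (rule prime_elem_linear_field_poly) (use False in auto)
      have "\<not> [:1, - cnj w:] dvd Q"
      proof
        assume "[:1, - cnj w:] dvd Q"
        then obtain k where "Q = [:1, - cnj w:] * k" by (auto elim!: dvdE)
        hence "poly Q (1 / cnj w) = 0" using False by simp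
        hence "w \<in> (\<lambda>x. 1 / cnj x) ` {x. poly Q x = 0}"
          by (intro image_eqI[of _ _ "1 / cnj w"]) auto
        thus False using that W_def by auto
      qed
      thus ?thesis using prime_elem_imp_coprime[OF pr] coprime_commute by blast
    qed
    have "Q dvd [:1, - cnj w:] * H w" unfolding peq by (rule dvd_triv_left)
    thus ?thesis using cop coprime_dvd_mult_right_iff by blast
  qed
  have "h j mod Q = 0"
  proof (rule poly_eqI)
    fix i
    define c where "c j = coeff (h j mod Q) i" for j
    have Hm: "H w mod Q = (\<Sum>j=1..n. smult (cnj (poly (h j) w)) (h j mod Q))" for w
      unfolding H_def by (rule mod_sum_smult)
    have z1: "(\<Sum>j=1..n. cnj (poly (h j) w) * c j) = 0" if "w \<in> W" for w
    proof -
      have "H w mod Q = 0" using dvdH[OF that] by (simp add: dvd_eq_mod_eq_0)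
      hence "coeff (H w mod Q) i = 0" by simp
      thus ?thesis by (simp add: Hm coeff_sum c_def)
    qed
    define F where "F = (\<Sum>j=1..n. smult (cnj (c j)) (h j))"
    have "F = 0"
    proof (rule poly_eq_infinite[OF infW])
      fix w assume "w \<in> W"
      from z1[OF this] have "cnj (\<Sum>j=1..n. cnj (poly (h j) w) * c j) = 0" by simp
      thus "poly F w = poly 0 w" by (simp add: F_def poly_sum mult.commute)
    qed
    hence "coeff (F mod Q) i = 0" by simp
    hence "(\<Sum>j=1..n. cnj (c j) * c j) = 0" by (simp add: F_def mod_sum_smult coeff_sum c_def)
    hence "c j = 0" by (rule sum_cnj_mult_zero[OF finite_atLeastAtMost _ j])
    thus "coeff (h j mod Q) i = coeff 0 i" by (simp add: c_def)
  qed
  thus ?thesis by (simp add: dvd_eq_mod_eq_0)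
qed

lemma hq: "j \<in> {1..n} \<Longrightarrow> h j = Q * q j"
  unfolding q_def using Q_dvd_h by simp

lemma K2:
  "(1 - z * cnj w) * (\<Sum>j=1..n. poly (q j) z * cnj (poly (q j) w))
   = poly Dc z * cnj (poly Dc w) - poly Nc z * cnj (poly Nc w)"
proof -
  have "(1 - z * cnj w) * (\<Sum>j=1..n. poly (q j) z * cnj (poly (q j) w))
   = poly 1 z * cnj (poly 1 w) * (poly Dc z * cnj (poly Dc w) - poly Nc z * cnj (poly Nc w))"
  proof (rule cancel_kernel[OF Q_ne])
    fix z w
    have "(\<Sum>j=1..n. poly (h j) z * cnj (poly (h j) w))
       = poly Q z * cnj (poly Q w) * (\<Sum>j=1..n. poly (q j) z * cnj (poly (q j) w))"
      unfolding sum_distrib_left by (rule sum.cong) (simp_all add: hq)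
    thus "poly Q z * cnj (poly Q w) * ((1 - z * cnj w) * (\<Sum>j=1..n. poly (q j) z * cnj (poly (q j) w))
     - poly 1 z * cnj (poly 1 w) * (poly Dc z * cnj (poly Dc w) - poly Nc z * cnj (poly Nc w))) = 0"
      using K1[of z w] by (simp add: algebra_simps)
  qed
  thus ?thesis by simp
qed

lemma diag_real:
  "(1 - (cmod z)\<^sup>2) * (\<Sum>j=1..n. (cmod (poly (q j) z))\<^sup>2) = (cmod (poly Dc z))\<^sup>2 - (cmod (poly Nc z))\<^sup>2"
proof -
  have "complex_of_real ((1 - (cmod z)\<^sup>2) * (\<Sum>j=1..n. (cmod (poly (q j) z))\<^sup>2))
     = complex_of_real ((cmod (poly Dc z))\<^sup>2 - (cmod (poly Nc z))\<^sup>2)"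
    using K2[of z z] by (simp only: of_real_mult of_real_diff of_real_sum complex_norm_square of_real_1)
  thus ?thesis using of_real_eq_iff by blast
qed

lemma Dc_nz:
  assumes "cmod z \<le> 1" shows "poly Dc z \<noteq> 0"
proof
  assume D0: "poly Dc z = 0"
  have "0 \<le> (1 - (cmod z)\<^sup>2) * (\<Sum>j=1..n. (cmod (poly (q j) z))\<^sup>2)"
    using assms by (intro mult_nonneg_nonneg sum_nonneg) (auto simp: power_le_one abs_square_le_1)
  hence "(cmod (poly Nc z))\<^sup>2 \<le> 0" using diag_real[of z] D0 by simp
  hence "poly Nc z = 0" by simp
  thus False using coprime_no_common_root[OF copr_c _ D0] by blast
qed

lemma Dc_ne: "Dc \<noteq> 0" using Dc_nz[of 0] by auto

lemma B_unimod:
  assumes "cmod z = 1" shows "B z * cnj (B z) = 1"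
proof -
  have "z * cnj z = 1" using assms complex_norm_square[of z] by simp
  hence "poly Nc z * cnj (poly Nc z) = poly Dc z * cnj (poly Dc z)" using K2[of z z] by simp
  moreover have "poly Dc z \<noteq> 0" using Dc_nz assms by simp
  ultimately show ?thesis by (simp add: B_def field_simps)
qed

lemma kernel_b:
  assumes "poly Dc z \<noteq> 0" "poly Dc w \<noteq> 0" "z * cnj w \<noteq> 1"
  shows "(\<Sum>j=1..n. b j z * cnj (b j w)) = (1 - B z * cnj (B w)) / (1 - z * cnj w)"
proof -
  have "(\<Sum>j=1..n. b j z * cnj (b j w)) = (\<Sum>j=1..n. poly (q j) z * cnj (poly (q j) w)) / (poly Dc z * cnj (poly Dc w))"
    by (simp add: b_def sum_divide_distrib)
  also have "(\<Sum>j=1..n. poly (q j) z * cnj (poly (q j) w)) = (poly Dc z * cnj (poly Dc w) - poly Nc z * cnj (poly Nc w)) / (1 - z * cnj w)"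
    using K2[of z w] assms(3) by (simp add: field_simps)
  finally show ?thesis using assms by (simp add: B_def field_simps)
qed

end




lemma alg2:
  fixes x y Bx By :: complex
  assumes "x * cnj x = 1" "Bx * cnj Bx = 1" "x \<noteq> y"
  shows "\<i> * cnj ((Bx - By) * x^k / (x - y) * \<i> * x) = (1 - Bx * cnj By) / (1 - x * cnj y) * cnj (Bx * x^k)"
proof -
  have xn: "x \<noteq> 0" using assms(1) by auto
  have e1: "1 - x * cnj y = x * (cnj x - cnj y)" using assms(1) by (simp add: algebra_simps)
  have nz: "cnj x - cnj y \<noteq> 0" using assms(3) by (metis complex_cnj_cancel_iff eq_iff_diff_eq_0)
  have e2: "(1 - Bx * cnj By) * cnj Bx = cnj Bx - cnj By"
    using assms(2) by (simp add: algebra_simps)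
  have "(1 - Bx * cnj By) / (1 - x * cnj y) * cnj (Bx * x^k) = ((1 - Bx * cnj By) * cnj Bx) * cnj x ^ k / (1 - x * cnj y)"
    by (simp only: complex_cnj_mult complex_cnj_power times_divide_eq_left mult.assoc)
  also have "\<dots> = (cnj Bx - cnj By) * cnj x ^ k / (x * (cnj x - cnj y))"
    by (simp only: e2 e1)
  also have "\<dots> = (cnj Bx - cnj By) * cnj x ^ k * cnj x / (cnj x - cnj y)"
  proof -
    have "inverse x = cnj x" using assms(1) by (rule inverse_unique)
    thus ?thesis by (simp add: divide_inverse inverse_mult_distrib mult.assoc)
  qed
  also have "\<dots> = \<i> * cnj ((Bx - By) * x^k / (x - y) * \<i> * x)"
    by (simp add: field_simps)
  finally show ?thesis by simp
qed

context prop36a begin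

definition "Lf k f = integral {0..2*pi} (\<lambda>t. f (cis t) * cnj (B (cis t) * cis t ^ k))"

lemma cont_b: "continuous_on (cball 0 1) (b j)"
  unfolding b_def by (intro continuous_intros) (auto dest: Dc_nz)
lemma hol_b: "b j holomorphic_on (ball 0 1)"
  unfolding b_def by (intro holomorphic_intros) (use Dc_nz less_imp_le in fastforce)
lemma cont_B: "continuous_on (cball 0 1) B"
  unfolding B_def by (intro continuous_intros) (auto dest: Dc_nz)
lemma hol_B: "B holomorphic_on (ball 0 1)"
  unfolding B_def by (intro holomorphic_intros) (use Dc_nz less_imp_le in fastforce)

lemma intg:
  assumes "continuous_on (cball 0 1) f"
  shows "(\<lambda>t. f (cis t) * cnj (B (cis t) * cis t ^ k)) integrable_on {0..2*pi}"
proof (rule integrable_continuous_interval)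
  have ci: "continuous_on {0..2*pi} (\<lambda>t. cis t)" by (intro continuous_intros)
  have im: "(\<lambda>t. cis t) ` {0..2*pi} \<subseteq> cball 0 1" by auto
  have "continuous_on {0..2*pi} (\<lambda>t. f (cis t))" by (rule continuous_on_compose2[OF assms ci im])
  moreover have "continuous_on {0..2*pi} (\<lambda>t. B (cis t))" by (rule continuous_on_compose2[OF cont_B ci im])
  ultimately show "continuous_on {0..2*pi} (\<lambda>t. f (cis t) * cnj (B (cis t) * cis t ^ k))"
    by (intro continuous_intros ci)
qed

lemma L_kernel:
  assumes w: "cmod w < 1"
  shows "Lf k (\<lambda>x. \<Sum>j=1..n. b j x * cnj (b j w)) = 0"
proof -
  define G where "G u = (B u - B w) * u^k" for u
  have contG: "continuous_on (cball 0 1) G" unfolding G_def by (intro continuous_intros cont_B)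
  have holG: "G holomorphic_on (ball 0 1)" unfolding G_def by (intro holomorphic_intros hol_B)
  have "((\<lambda>u. G u / (u - w)) has_contour_integral (2 * of_real pi * \<i> * G w)) (circlepath 0 1)"
    by (rule Cauchy_integral_circlepath[OF contG holG]) (use w in simp)
  hence "((\<lambda>u. G u / (u - w)) has_contour_integral 0) (part_circlepath 0 1 0 (2*pi))"
    by (simp add: G_def circlepath_def)
  hence "((\<lambda>t. G (cis t) / (cis t - w) * \<i> * cis t) has_integral 0) {0..2*pi}"
    by (subst (asm) has_contour_integral_part_circlepath_iff) auto
  hence "(cnj \<circ> (\<lambda>t. G (cis t) / (cis t - w) * \<i> * cis t) has_integral cnj 0) {0..2*pi}"
    by (subst has_integral_cnj)
  hence "((\<lambda>t. \<i> * (cnj \<circ> (\<lambda>t. G (cis t) / (cis t - w) * \<i> * cis t)) t) has_integral \<i> * cnj 0) {0..2*pi}"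
    by (rule has_integral_mult_right)
  moreover have "\<i> * (cnj \<circ> (\<lambda>t. G (cis t) / (cis t - w) * \<i> * cis t)) t
      = (\<Sum>j=1..n. b j (cis t) * cnj (b j w)) * cnj (B (cis t) * cis t ^ k)" for t
  proof -
    have c1: "cmod (cis t) = 1" by simp
    have xx: "cis t * cnj (cis t) = 1" using complex_norm_square[of "cis t"] by simp
    have ne: "cis t \<noteq> w" using w by auto
    have "cmod (cis t * cnj w) < 1" using w by (simp add: norm_mult)
    hence ne1: "cis t * cnj w \<noteq> 1" by auto
    have "(\<Sum>j=1..n. b j (cis t) * cnj (b j w)) = (1 - B (cis t) * cnj (B w)) / (1 - cis t * cnj w)"
      by (rule kernel_b[OF Dc_nz Dc_nz ne1]) (use w in auto)
    thus ?thesis using alg2[OF xx B_unimod[OF c1] ne, of "B w" k] by (simp add: G_def)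
  qed
  ultimately have "((\<lambda>t. (\<Sum>j=1..n. b j (cis t) * cnj (b j w)) * cnj (B (cis t) * cis t ^ k)) has_integral 0) {0..2*pi}"
    by simp
  thus ?thesis unfolding Lf_def by (rule integral_unique)
qed

lemma L_lin:
  "Lf k (\<lambda>x. \<Sum>j=1..n. a j * b j x) = (\<Sum>j=1..n. a j * Lf k (b j))"
proof -
  have "Lf k (\<lambda>x. \<Sum>j=1..n. a j * b j x)
      = integral {0..2*pi} (\<lambda>t. \<Sum>j=1..n. a j * (b j (cis t) * cnj (B (cis t) * cis t ^ k)))"
    unfolding Lf_def by (simp add: sum_distrib_right mult.assoc)
  also have "\<dots> = (\<Sum>j=1..n. integral {0..2*pi} (\<lambda>t. a j * (b j (cis t) * cnj (B (cis t) * cis t ^ k))))"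
  proof (rule integral_sum[OF finite_atLeastAtMost])
    fix j show "(\<lambda>t. a j * (b j (cis t) * cnj (B (cis t) * cis t ^ k))) integrable_on {0..2*pi}"
      by (rule integrable_on_mult_right[OF intg[OF cont_b]])
  qed
  also have "\<dots> = (\<Sum>j=1..n. a j * Lf k (b j))"
    unfolding Lf_def by simp
  finally show ?thesis .
qed

lemma L_zero: "Lf k (b j) = 0" if j: "j \<in> {1..n}"
proof -
  define c where "c j = Lf k (b j)" for j
  have z1: "(\<Sum>j=1..n. cnj (b j w) * c j) = 0" if "cmod w < 1" for w
  proof -
    have "(\<Sum>j=1..n. cnj (b j w) * c j) = Lf k (\<lambda>x. \<Sum>j=1..n. cnj (b j w) * b j x)"
      unfolding c_def by (rule L_lin[symmetric])
    also have "\<dots> = Lf k (\<lambda>x. \<Sum>j=1..n. b j x * cnj (b j w))" by (simp add: mult.commute)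
    also have "\<dots> = 0" by (rule L_kernel[OF that])
    finally show ?thesis .
  qed
  define F where "F = (\<Sum>j=1..n. smult (cnj (c j)) (q j))"
  have "F = 0"
  proof (rule poly_eq_infinite[OF infinite_ball01])
    fix w :: complex assume "w \<in> ball 0 1"
    hence w: "cmod w < 1" by simp
    have dn: "poly Dc w \<noteq> 0" using Dc_nz w by simp
    have pF: "poly F w = poly Dc w * (\<Sum>j=1..n. cnj (c j) * b j w)"
      using dn by (simp add: F_def poly_sum b_def sum_distrib_left)
    have "(\<Sum>j=1..n. cnj (c j) * b j w) = cnj (\<Sum>j=1..n. cnj (b j w) * c j)"
      by (simp add: mult.commute)
    also have "\<dots> = 0" by (simp only: z1[OF w] complex_cnj_zero)
    finally show "poly F w = poly 0 w" using pF by simp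
  qed
  have "(\<lambda>x. \<Sum>j=1..n. cnj (c j) * b j x) = (\<lambda>x. 0)"
  proof (rule ext)
    fix x
    have "poly F x = 0" using \<open>F = 0\<close> by simp
    hence s0: "(\<Sum>j=1..n. cnj (c j) * poly (q j) x) = 0" by (simp add: F_def poly_sum)
    have "(\<Sum>j=1..n. cnj (c j) * b j x) = (\<Sum>j=1..n. cnj (c j) * poly (q j) x) / poly Dc x"
      by (simp add: b_def sum_divide_distrib)
    thus "(\<Sum>j=1..n. cnj (c j) * b j x) = 0" using s0 by simp
  qed
  hence "(\<Sum>j=1..n. cnj (c j) * c j) = Lf k (\<lambda>x. 0)"
    using L_lin[of k "\<lambda>j. cnj (c j)"] unfolding c_def by simp
  also have "Lf k (\<lambda>x. 0) = 0" by (simp add: Lf_def)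
  finally have "(\<Sum>j=1..n. cnj (c j) * c j) = 0" .
  hence "c j = 0" by (rule sum_cnj_mult_zero[OF finite_atLeastAtMost _ j])
  thus ?thesis by (simp add: c_def)
qed

lemma orth: "j \<in> {1..n} \<Longrightarrow> orth_BH2 (Balpha n p \<alpha>) (b j)"
  using L_zero unfolding orth_BH2_def Balpha_eq Lf_def by blast

end




theorem proposition3p6:
  fixes n :: nat and p :: "complex poly poly" and Q :: "complex poly"
    and R :: "nat \<Rightarrow> complex poly poly"
  assumes n: "n \<ge> 1"
    and deg_p: "degree p \<le> 1" "\<forall>i. degree (coeff p i) \<le> n"
    and nozero: "\<forall>z1 z2. cmod z1 < 1 \<longrightarrow> cmod z2 < 1 \<longrightarrow> eval2 p z1 z2 \<noteq> 0"
    and deg_pt: "degree (ptilde n p) = 1" "degz1 (ptilde n p) = n"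
    and copr: "coprime p (ptilde n p)"
    and deg_Q: "degree Q \<le> n"
    and deg_R: "\<forall>j\<in>{1..n}. degree (R j) \<le> 1 \<and> (\<forall>i. degree (coeff (R j) i) \<le> n - 1)"
    and agler: "\<forall>z1 z2 w1 w2.
        eval2 p z1 z2 * cnj (eval2 p w1 w2) - eval2 (ptilde n p) z1 z2 * cnj (eval2 (ptilde n p) w1 w2)
        = (1 - z1 * cnj w1) * (\<Sum>j=1..n. eval2 (R j) z1 z2 * cnj (eval2 (R j) w1 w2))
          + (1 - z2 * cnj w2) * (poly Q z1 * cnj (poly Q w1))"
  shows "(\<forall>\<zeta>. cmod \<zeta> = 1 \<longrightarrow>
            (cmod (poly Q \<zeta>))\<^sup>2 = (cmod (poly (coeff p 0) \<zeta>))\<^sup>2 - (cmod (poly (coeff p 1) \<zeta>))\<^sup>2)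
       \<and> (\<forall>\<alpha>. cmod \<alpha> = 1 \<longrightarrow> (\<forall>j\<in>{1..n}.
            \<exists>!r :: complex poly. degree r \<le> n - 1 \<and>
              (\<exists>b. rational_disk_algebra b \<and> orth_BH2 (Balpha n p \<alpha>) b \<and>
                 (\<forall>z1 z2. cmod z1 \<le> 1 \<longrightarrow> cmod z2 \<le> 1 \<longrightarrow>
                    eval2 (R j) z1 z2 = poly r z1 * (1 - Balpha n p \<alpha> z1 * z2)
                                         + z2 * poly Q z1 * b z1))))"
proof -
  have P: "prop36 n p Q R"
    by (rule prop36.intro) (use n deg_p deg_pt copr deg_R agler in auto)
  interpret I: prop36 n p Q R by (rule P)
  have part1: "\<forall>\<zeta>. cmod \<zeta> = 1 \<longrightarrow>
            (cmod (poly Q \<zeta>))\<^sup>2 = (cmod (poly (coeff p 0) \<zeta>))\<^sup>2 - (cmod (poly (coeff p 1) \<zeta>))\<^sup>2"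
    using I.part1 unfolding I.P1_def I.P2_def by blast
  have part2: "\<forall>\<alpha>. cmod \<alpha> = 1 \<longrightarrow> (\<forall>j\<in>{1..n}.
            \<exists>!r :: complex poly. degree r \<le> n - 1 \<and>
              (\<exists>b. rational_disk_algebra b \<and> orth_BH2 (Balpha n p \<alpha>) b \<and>
                 (\<forall>z1 z2. cmod z1 \<le> 1 \<longrightarrow> cmod z2 \<le> 1 \<longrightarrow>
                    eval2 (R j) z1 z2 = poly r z1 * (1 - Balpha n p \<alpha> z1 * z2)
                                         + z2 * poly Q z1 * b z1)))"
  proof (intro allI impI ballI)
    fix \<alpha> :: complex and j :: nat
    assume \<alpha>: "cmod \<alpha> = 1" and j: "j \<in> {1..n}"
    interpret A: prop36a n p Q R \<alpha>
      by (rule prop36a.intro[OF P]) (rule prop36a_axioms.intro[OF \<alpha>])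
    show "\<exists>!r :: complex poly. degree r \<le> n - 1 \<and>
              (\<exists>b. rational_disk_algebra b \<and> orth_BH2 (Balpha n p \<alpha>) b \<and>
                 (\<forall>z1 z2. cmod z1 \<le> 1 \<longrightarrow> cmod z2 \<le> 1 \<longrightarrow>
                    eval2 (R j) z1 z2 = poly r z1 * (1 - Balpha n p \<alpha> z1 * z2)
                                         + z2 * poly Q z1 * b z1))"
    proof (rule ex1I)
      have degr: "degree (I.r j) \<le> n - 1" using deg_R j by (simp add: I.r_def)
      have rda: "rational_disk_algebra (A.b j)"
      proof -
        have "\<exists>u v. v \<noteq> 0 \<and> (\<forall>z\<in>cball 0 1. poly v z \<noteq> 0 \<longrightarrow> A.b j z = poly u z / poly v z)"
          by (rule exI[of _ "A.q j"], rule exI[of _ A.Dc]) (simp add: A.b_def A.Dc_ne)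
        thus ?thesis unfolding rational_disk_algebra_def using A.cont_b A.hol_b by blast
      qed
      have rep: "eval2 (R j) z1 z2 = poly (I.r j) z1 * (1 - Balpha n p \<alpha> z1 * z2) + z2 * poly Q z1 * A.b j z1"
        if z1: "cmod z1 \<le> 1" for z1 z2
      proof -
        have dn: "poly A.Dc z1 \<noteq> 0" using A.Dc_nz z1 by simp
        have hz: "poly Q z1 * poly (A.q j) z1 = poly A.Nc z1 * poly (I.r j) z1 + poly A.Dc z1 * poly (I.s j) z1"
          using arg_cong[OF A.hq[OF j], of "\<lambda>f. poly f z1"] by (simp add: A.h_def)
        have "poly (I.r j) z1 * (1 - Balpha n p \<alpha> z1 * z2) + z2 * poly Q z1 * A.b j z1
            = poly (I.r j) z1 * (1 - poly A.Nc z1 / poly A.Dc z1 * z2) + z2 * (poly Q z1 * poly (A.q j) z1) / poly A.Dc z1"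
          by (simp add: A.Balpha_eq A.B_def A.b_def)
        also have "\<dots> = poly (I.r j) z1 * (1 - poly A.Nc z1 / poly A.Dc z1 * z2) + z2 * (poly A.Nc z1 * poly (I.r j) z1 + poly A.Dc z1 * poly (I.s j) z1) / poly A.Dc z1"
          by (simp only: hz)
        also have "\<dots> = poly (I.r j) z1 + z2 * poly (I.s j) z1"
          using dn by (simp add: field_simps)
        also have "\<dots> = eval2 (R j) z1 z2" by (simp add: I.ev_R[OF j])
        finally show ?thesis by simp
      qed
      show "degree (I.r j) \<le> n - 1 \<and>
              (\<exists>b. rational_disk_algebra b \<and> orth_BH2 (Balpha n p \<alpha>) b \<and>
                 (\<forall>z1 z2. cmod z1 \<le> 1 \<longrightarrow> cmod z2 \<le> 1 \<longrightarrow>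
                    eval2 (R j) z1 z2 = poly (I.r j) z1 * (1 - Balpha n p \<alpha> z1 * z2)
                                         + z2 * poly Q z1 * b z1))"
        using degr rda A.orth[OF j] rep by blast
    next
      fix r' :: "complex poly"
      assume "degree r' \<le> n - 1 \<and>
              (\<exists>b. rational_disk_algebra b \<and> orth_BH2 (Balpha n p \<alpha>) b \<and>
                 (\<forall>z1 z2. cmod z1 \<le> 1 \<longrightarrow> cmod z2 \<le> 1 \<longrightarrow>
                    eval2 (R j) z1 z2 = poly r' z1 * (1 - Balpha n p \<alpha> z1 * z2)
                                         + z2 * poly Q z1 * b z1))"
      then obtain bb where rep': "\<forall>z1 z2. cmod z1 \<le> 1 \<longrightarrow> cmod z2 \<le> 1 \<longrightarrow>
                    eval2 (R j) z1 z2 = poly r' z1 * (1 - Balpha n p \<alpha> z1 * z2)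
                                         + z2 * poly Q z1 * bb z1" by blast
      show "r' = I.r j"
      proof (rule poly_eq_infinite[OF infinite_ball01])
        fix z :: complex assume "z \<in> ball 0 1"
        hence "cmod z \<le> 1" by simp
        hence "eval2 (R j) z 0 = poly r' z" using rep'[rule_format, of z 0] by simp
        thus "poly r' z = poly (I.r j) z" by (simp add: I.ev_R[OF j])
      qed
    qed
  qed
  show ?thesis using part1 part2 by blast
qed



end
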